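(* Let $(X_t)_{t\ge1}$ be random variables in $[0,1]$ with average conditional means $(\mu_t)$, and let $(\widehat X_t)$ be a predictable sequence in $[0,1)$. Let $h:[0,\infty)\to(0,\infty)$ be nondecreasing with $\sum_{j=0}^\infty 1/h(j)\le1$. Fix $\eta>1$, $\alpha\in(0,1)$ and $L_0\ge1$, and let $V_t=\sum_{i\le t}\psi_E(|X_i-\widehat X_i|)$ and $\overline X_t=t^{-1}\sum_{i\le t}X_i$. Then, with probability at least $1-\alpha$, simultaneously for all $t\ge1$ such that $L_0\le V_t<\infty$ and $h(\log_\eta(V_t/L_0))\le\frac{\alpha}{2}\exp(V_t)$, we have \[ |\overline X_t-\mu_t|\le\frac{\sqrt\eta+1}{t}\sqrt{V_t\left(\log\frac{2}{\alpha}+\log h\Big(\log_\eta\frac{V_t}{L_0}\Big)\right)} . \]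
   Context: $\mathcal F_t=\sigma(X_1,\dots,X_t)$, and $\mathcal F_0$ is trivial. A sequence is predictable if its $t$-th term is $\mathcal F_{t-1}$-measurable. The average conditional mean is $\mu_t:=t^{-1}\sum_{j\le t}\mathbb{E}[X_j\mid\mathcal F_{j-1}]$. $\psi_E(x)=-\log(1-x)-x$ for $x\in[0,1)$, and $\psi_E(1):=+\infty$. *)

theory Defs
  imports "HOL-Probability.Probability"
begin

definition nat_filtration :: "'a measure \<Rightarrow> (nat \<Rightarrow> 'a \<Rightarrow> real) \<Rightarrow> nat \<Rightarrow> 'a measure" where
  "nat_filtration M X t =
     sigma (space M) (\<Union>i\<in>{1..t}. {X i -` A \<inter> space M | A. A \<in> sets borel})"

definition avg_cond_mean :: "'a measure \<Rightarrow> (nat \<Rightarrow> 'a \<Rightarrow> real) \<Rightarrow> nat \<Rightarrow> 'a \<Rightarrow> real" where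
  "avg_cond_mean M X t \<omega> =
     (\<Sum>j\<in>{1..t}. real_cond_exp M (nat_filtration M X (j - 1)) (X j) \<omega>) / real t"

definition psiE :: "real \<Rightarrow> ereal" where
  "psiE x = (if x < 1 then ereal (- ln (1 - x) - x) else \<infinity>)"

definition Vsum :: "(nat \<Rightarrow> 'a \<Rightarrow> real) \<Rightarrow> (nat \<Rightarrow> 'a \<Rightarrow> real) \<Rightarrow> nat \<Rightarrow> 'a \<Rightarrow> ereal" where
  "Vsum X Xh t \<omega> = (\<Sum>i\<in>{1..t}. psiE \<bar>X i \<omega> - Xh i \<omega>\<bar>)"

definition emp_mean :: "(nat \<Rightarrow> 'a \<Rightarrow> real) \<Rightarrow> nat \<Rightarrow> 'a \<Rightarrow> real" where
  "emp_mean X t \<omega> = (\<Sum>i\<in>{1..t}. X i \<omega>) / real t"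

end

theory Submission
  imports Defs
begin


definition psir :: "real \<Rightarrow> real" where "psir y = - ln (1 - y) - y"

lemma psir_sums:
  assumes "0 \<le> y" "y < 1"
  shows "(\<lambda>n. if n < 2 then 0 else y ^ n / real n) sums psir y"
proof -
  have s1: "(\<lambda>n. - ((-(-y))^n) / of_nat n) sums ln (1 + (-y))"
    by (rule ln_series') (use assms in auto)
  have s1': "(\<lambda>n. y ^ n / real n) sums (- ln (1 - y))"
    using sums_minus[OF s1] by simp
  have s2: "(\<lambda>n. if n = 1 then y ^ n / real n else 0) sums (y ^ 1 / real 1)"
    by (rule sums_single)
  have "(\<lambda>n. y ^ n / real n - (if n = 1 then y ^ n / real n else 0)) sums (- ln (1 - y) - y ^ 1 / real 1)"
    by (rule sums_diff[OF s1' s2])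
  moreover have "(\<lambda>n. y ^ n / real n - (if n = 1 then y ^ n / real n else 0)) = (\<lambda>n. if n < 2 then 0 else y ^ n / real n)"
  proof
    fix n :: nat show "y ^ n / real n - (if n = 1 then y ^ n / real n else 0) = (if n < 2 then 0 else y ^ n / real n)"
      by (cases "n = 0"; cases "n = 1") auto
  qed
  ultimately show ?thesis by (simp add: psir_def)
qed

lemma psir_nonneg: assumes "0 \<le> y" "y < 1" shows "0 \<le> psir y"
  by (rule sums_le[OF _ sums_zero psir_sums[OF assms]]) (use assms in auto)

lemma psir_scale:
  assumes "0 \<le> y" "y < 1" "0 \<le> l" "l \<le> 1"
  shows "psir (l * y) \<le> l^2 * psir y"
proof -
  have ly: "0 \<le> l * y" "l * y < 1" using assms by (auto simp: mult_le_one intro: le_less_trans[of _ y] mult_left_le_one_le)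
  have s2: "(\<lambda>n. l^2 * (if n < 2 then 0 else y ^ n / real n)) sums (l^2 * psir y)"
    by (rule sums_mult[OF psir_sums[OF assms(1,2)]])
  show ?thesis
  proof (rule sums_le[OF _ psir_sums[OF ly] s2])
    fix n :: nat
    show "(if n < 2 then 0 else (l*y) ^ n / real n) \<le> l^2 * (if n < 2 then 0 else y ^ n / real n)"
    proof (cases "n < 2")
      case False
      then have "l ^ n \<le> l ^ 2" using assms by (intro power_decreasing) auto
      then have "l ^ n * y ^ n \<le> l^2 * y^n" using assms by (intro mult_right_mono) auto
      then show ?thesis using False by (simp add: power_mult_distrib divide_right_mono)
    qed simp
  qed
qed

lemma fan_ineq:
  assumes "\<bar>u\<bar> < 1"
  shows "exp (u - psir \<bar>u\<bar>) \<le> 1 + u"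
proof (cases "u \<le> 0")
  case True
  then have "u - psir \<bar>u\<bar> = ln (1 + u)" by (simp add: psir_def)
  then show ?thesis using assms by simp
next
  case False
  have s1: "(\<lambda>n. - ((-u)^n) / of_nat n) sums ln (1 + u)" by (rule ln_series') (use assms in auto)
  have s2: "(\<lambda>n. - ((-(-u))^n) / of_nat n) sums ln (1 + (-u))" by (rule ln_series') (use assms in auto)
  have s3: "(\<lambda>n. - ((-u)^n) / of_nat n - - ((-(-u))^n) / of_nat n) sums (ln (1 + u) - ln (1 + (-u)))"
    by (rule sums_diff[OF s1 s2])
  have s4: "(\<lambda>n. if n = 1 then - ((-u)^n) / of_nat n - - ((-(-u))^n) / of_nat n else 0) sums (2*u)"
    using sums_single[of 1 "\<lambda>n. - ((-u)^n) / of_nat n - - ((-(-u))^n) / of_nat n"] by simp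
  have le: "2 * u \<le> ln (1 + u) - ln (1 + (-u))"
  proof (rule sums_le[OF _ s4 s3])
    fix n :: nat
    have "(-u)^n \<le> u^n" using False
      by (metis abs_ge_self abs_minus_cancel abs_of_nonneg linorder_not_le order.strict_implies_order power_abs)
    then have "0 \<le> - ((-u)^n) / of_nat n - - ((-(-u))^n) / of_nat n"
      by (auto simp: divide_right_mono diff_divide_distrib[symmetric])
    then show "(if n = 1 then - ((-u)^n) / of_nat n - - ((-(-u))^n) / of_nat n else 0) \<le> - ((-u)^n) / of_nat n - - ((-(-u))^n) / of_nat n"
      by auto
  qed
  then have "u - psir \<bar>u\<bar> \<le> ln (1 + u)" using False by (simp add: psir_def)
  then have "exp (u - psir \<bar>u\<bar>) \<le> exp (ln (1 + u))" by simp
  also have "exp (ln (1 + u)) = 1 + u" using assms by simp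
  finally show ?thesis .
qed




lemma ville:
  assumes P: "prob_space M"
    and sub: "\<And>n. subalgebra M (F n)"
    and mono: "\<And>n. sets (F n) \<subseteq> sets (F (Suc n))"
    and meas: "\<And>n. Mt n \<in> borel_measurable (F n)"
    and nonneg: "\<And>n \<omega>. \<omega> \<in> space M \<Longrightarrow> 0 \<le> Mt n \<omega>"
    and bnd: "\<And>n. \<exists>B. \<forall>\<omega>\<in>space M. Mt n \<omega> \<le> B"
    and M0: "\<And>\<omega>. \<omega> \<in> space M \<Longrightarrow> Mt 0 \<omega> = 1"
    and super: "\<And>n D. D \<in> sets (F n) \<Longrightarrow>
        (\<integral>\<omega>. indicator D \<omega> * Mt (Suc n) \<omega> \<partial>M) \<le> (\<integral>\<omega>. indicator D \<omega> * Mt n \<omega> \<partial>M)"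
    and c: "c > 1"
  shows "{\<omega>\<in>space M. \<exists>n. c \<le> Mt n \<omega>} \<in> sets M \<and> measure M {\<omega>\<in>space M. \<exists>n. c \<le> Mt n \<omega>} \<le> 1 / c"
proof -
  interpret prob_space M by (rule P)
  have spF: "space (F n) = space M" for n using sub[of n] by (simp add: subalgebra_def)
  have setsF: "sets (F n) \<subseteq> sets M" for n using sub[of n] by (simp add: subalgebra_def)
  have monoF: "sets (F j) \<subseteq> sets (F n)" if "j \<le> n" for j n
    using that by (induction n rule: dec_induct) (use mono in auto)
  have measF: "Mt j \<in> borel_measurable (F n)" if "j \<le> n" for j n
  proof (rule measurable_from_subalg[OF _ meas[of j]])
    show "subalgebra (F n) (F j)" using monoF[OF that] spF by (simp add: subalgebra_def)
  qed
  have measM: "Mt j \<in> borel_measurable M" for j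
    using measurable_from_subalg[OF sub meas] by blast
  define E where "E n = {\<omega>\<in>space M. \<exists>j\<le>n. c \<le> Mt j \<omega>}" for n
  have EF: "E n \<in> sets (F n)" for n
  proof -
    have "E n = (\<Union>j\<in>{..n}. {\<omega>\<in>space (F n). c \<le> Mt j \<omega>})" by (auto simp: E_def spF)
    also have "\<dots> \<in> sets (F n)"
      using measF by (intro sets.finite_UN) (auto intro!: measurable_sets_borel[where A="{c..}", simplified])
    finally show ?thesis .
  qed
  have EM: "E n \<in> sets M" for n using EF setsF by blast
  have intg: "integrable M (\<lambda>\<omega>. indicator D \<omega> * Mt n \<omega>)" if "D \<in> sets M" for D n
  proof -
    obtain B where B: "\<forall>\<omega>\<in>space M. Mt n \<omega> \<le> B" using bnd by blast
    show ?thesis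
    proof (rule integrable_const_bound[where B="max B 0"])
      show "AE x in M. norm (indicator D x * Mt n x) \<le> max B 0"
      proof (rule AE_I2)
        fix x assume x: "x \<in> space M"
        show "norm (indicator D x * Mt n x) \<le> max B 0"
          using B x nonneg[OF x, of n] by (cases "x \<in> D") auto
      qed
      show "(\<lambda>\<omega>. indicator D \<omega> * Mt n \<omega>) \<in> borel_measurable M" using that measM by measurable
    qed
  qed
  have inv: "c * measure M (E n) + (\<integral>\<omega>. indicator (space M - E n) \<omega> * Mt n \<omega> \<partial>M) \<le> 1" for n
  proof (induction n)
    case 0
    have "E 0 = {}" using M0 c by (auto simp: E_def)
    moreover have "(\<integral>\<omega>. indicator (space M) \<omega> * Mt 0 \<omega> \<partial>M) = (\<integral>\<omega>. 1 \<partial>M)"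
      by (rule Bochner_Integration.integral_cong) (auto simp: M0)
    ultimately show ?case by (simp add: prob_space)
  next
    case (Suc n)
    define G where "G = space M - E n"
    define H where "H = {\<omega>\<in>space M. c \<le> Mt (Suc n) \<omega>}"
    have GF: "G \<in> sets (F n)" unfolding G_def using EF[of n] spF[of n]
      by (metis sets.compl_sets)
    have GM: "G \<in> sets M" using GF setsF by blast
    have HM: "H \<in> sets M" unfolding H_def using measM by measurable
    have i1: "integrable M (\<lambda>\<omega>. c * indicator (G \<inter> H) \<omega>)"
      using GM HM by (intro integrable_mult_right integrable_real_indicator) (auto simp: less_top[symmetric])
    have E1: "E (Suc n) = E n \<union> (G \<inter> H)"
      by (auto simp: E_def G_def H_def le_Suc_eq)
    have E2: "space M - E (Suc n) = G - H" by (auto simp: E_def G_def H_def le_Suc_eq)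
    have mE: "measure M (E (Suc n)) = measure M (E n) + measure M (G \<inter> H)"
      unfolding E1 using EM GM HM by (intro finite_measure_Union) (auto simp: G_def)
    have "c * measure M (G \<inter> H) + (\<integral>\<omega>. indicator (G - H) \<omega> * Mt (Suc n) \<omega> \<partial>M)
        = (\<integral>\<omega>. c * indicator (G \<inter> H) \<omega> + indicator (G - H) \<omega> * Mt (Suc n) \<omega> \<partial>M)"
    proof -
      have "(\<integral>\<omega>. c * indicator (G \<inter> H) \<omega> \<partial>M) = c * measure M (G \<inter> H)" using GM HM by simp
      then show ?thesis
        using Bochner_Integration.integral_add[OF i1 intg[of "G - H" "Suc n"]] GM HM by simp
    qed
    also have "\<dots> \<le> (\<integral>\<omega>. indicator G \<omega> * Mt (Suc n) \<omega> \<partial>M)"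
    proof (rule integral_mono)
      show "integrable M (\<lambda>\<omega>. c * indicator (G \<inter> H) \<omega> + indicator (G - H) \<omega> * Mt (Suc n) \<omega>)"
        using i1 intg[of "G - H" "Suc n"] GM HM by (intro Bochner_Integration.integrable_add) auto
      show "integrable M (\<lambda>\<omega>. indicator G \<omega> * Mt (Suc n) \<omega>)" using intg GM by blast
      fix \<omega> assume "\<omega> \<in> space M"
      then show "c * indicator (G \<inter> H) \<omega> + indicator (G - H) \<omega> * Mt (Suc n) \<omega> \<le> indicator G \<omega> * Mt (Suc n) \<omega>"
        by (auto simp: indicator_def H_def)
    qed
    also have "\<dots> \<le> (\<integral>\<omega>. indicator G \<omega> * Mt n \<omega> \<partial>M)" by (rule super[OF GF])
    finally show ?case using Suc.IH unfolding mE E2 G_def by (simp add: algebra_simps)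
  qed
  have bndE: "measure M (E n) \<le> 1 / c" for n
  proof -
    have "0 \<le> (\<integral>\<omega>. indicator (space M - E n) \<omega> * Mt n \<omega> \<partial>M)"
      by (rule integral_nonneg_AE) (auto intro!: AE_I2 simp: nonneg)
    then have "c * measure M (E n) \<le> 1" using inv[of n] by linarith
    then show ?thesis using c by (simp add: field_simps)
  qed
  have U: "{\<omega>\<in>space M. \<exists>n. c \<le> Mt n \<omega>} = (\<Union>n. E n)" by (auto simp: E_def)
  have inc: "incseq E" by (auto simp: incseq_def E_def) (meson order_trans)
  have "(\<lambda>n. measure M (E n)) \<longlonglongrightarrow> measure M (\<Union>n. E n)"
    by (rule finite_Lim_measure_incseq) (use EM inc in auto)
  then have "measure M (\<Union>n. E n) \<le> 1 / c" by (rule LIMSEQ_le_const2) (use bndE in auto)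
  moreover have "(\<Union>n. E n) \<in> sets M" using EM by auto
  ultimately show ?thesis unfolding U by auto
qed




definition mtil :: "'a measure \<Rightarrow> (nat \<Rightarrow> 'a \<Rightarrow> real) \<Rightarrow> nat \<Rightarrow> 'a \<Rightarrow> real" where
  "mtil M X i \<omega> = max 0 (min 1 (real_cond_exp M (nat_filtration M X (i - 1)) (X i) \<omega>))"

definition Zf :: "'a measure \<Rightarrow> (nat \<Rightarrow> 'a \<Rightarrow> real) \<Rightarrow> (nat \<Rightarrow> 'a \<Rightarrow> real) \<Rightarrow> real \<Rightarrow> real \<Rightarrow> nat \<Rightarrow> 'a \<Rightarrow> real" where
  "Zf M X Xh l s i \<omega> = exp (l * (s * (X i \<omega> - mtil M X i \<omega>)) - psir (l * \<bar>X i \<omega> - Xh i \<omega>\<bar>))"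

definition Mp :: "'a measure \<Rightarrow> (nat \<Rightarrow> 'a \<Rightarrow> real) \<Rightarrow> (nat \<Rightarrow> 'a \<Rightarrow> real) \<Rightarrow> real \<Rightarrow> real \<Rightarrow> nat \<Rightarrow> 'a \<Rightarrow> real" where
  "Mp M X Xh l s n \<omega> = (\<Prod>i\<in>{1..n}. Zf M X Xh l s i \<omega>)"

context
  fixes M :: "'a measure" and X Xh :: "nat \<Rightarrow> 'a \<Rightarrow> real"
  assumes P: "prob_space M"
    and X_meas: "\<And>t. t \<ge> 1 \<Longrightarrow> X t \<in> borel_measurable M"
    and X_range: "\<And>t \<omega>. t \<ge> 1 \<Longrightarrow> \<omega> \<in> space M \<Longrightarrow> X t \<omega> \<in> {0..1}"
    and Xh_pred: "\<And>t. t \<ge> 1 \<Longrightarrow> Xh t \<in> borel_measurable (nat_filtration M X (t - 1))"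
    and Xh_range: "\<And>t \<omega>. t \<ge> 1 \<Longrightarrow> \<omega> \<in> space M \<Longrightarrow> Xh t \<omega> \<in> {0..<1}"
begin

definition gen :: "nat \<Rightarrow> 'a set set" where
  "gen n = (\<Union>i\<in>{1..n}. {X i -` A \<inter> space M | A. A \<in> sets borel})"

lemma gen_Pow: "gen n \<subseteq> Pow (space M)" by (auto simp: gen_def)

lemma sets_F: "sets (nat_filtration M X n) = sigma_sets (space M) (gen n)"
  unfolding nat_filtration_def gen_def[symmetric] by (rule sets_measure_of[OF gen_Pow])

lemma space_F: "space (nat_filtration M X n) = space M"
  unfolding nat_filtration_def by (simp add: space_measure_of_conv)

lemma gen_sets: "gen n \<subseteq> sets M"
  using X_meas by (auto simp: gen_def)

lemma sub_F: "subalgebra M (nat_filtration M X n)"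
  unfolding subalgebra_def space_F sets_F using sets.sigma_sets_subset[OF gen_sets] by simp

lemma mono_F: "j \<le> n \<Longrightarrow> sets (nat_filtration M X j) \<subseteq> sets (nat_filtration M X n)"
  unfolding sets_F by (rule sigma_sets_mono') (unfold gen_def, rule UN_mono, auto)

lemma lift_F: "f \<in> borel_measurable (nat_filtration M X j) \<Longrightarrow> j \<le> n \<Longrightarrow> f \<in> borel_measurable (nat_filtration M X n)"
  by (rule measurable_from_subalg[of _ "nat_filtration M X j"]) (auto simp: subalgebra_def space_F mono_F)

lemma liftM: "f \<in> borel_measurable (nat_filtration M X j) \<Longrightarrow> f \<in> borel_measurable M"
  by (rule measurable_from_subalg[OF sub_F])

lemma X_F: assumes "1 \<le> i" "i \<le> n" shows "X i \<in> borel_measurable (nat_filtration M X n)"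
proof (rule measurableI)
  fix A :: "real set" assume "A \<in> sets borel"
  then have "X i -` A \<inter> space M \<in> gen n" using assms unfolding gen_def by (intro UN_I[of i]) auto
  then show "X i -` A \<inter> space (nat_filtration M X n) \<in> sets (nat_filtration M X n)"
    unfolding sets_F space_F by auto
qed auto

lemma sfs: "sigma_finite_subalgebra M (nat_filtration M X n)"
proof -
  interpret prob_space M by (rule P)
  have "finite_measure_subalgebra M (nat_filtration M X n)"
    by unfold_locales (rule sub_F)
  then show ?thesis by (rule finite_measure_subalgebra_is_sigma_finite)
qed

lemma mtil_meas: "mtil M X i \<in> borel_measurable (nat_filtration M X (i - 1))"
  unfolding mtil_def by measurable

lemma mtil_range: "0 \<le> mtil M X i \<omega>" "mtil M X i \<omega> \<le> 1"
  unfolding mtil_def by auto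

lemma X_int: "1 \<le> i \<Longrightarrow> integrable M (X i)"
proof -
  assume i: "1 \<le> i"
  interpret prob_space M by (rule P)
  show ?thesis
    by (rule integrable_const_bound[where B=1]) (use X_range[OF i] X_meas[OF i] in auto)
qed

lemma mtil_AE: assumes "1 \<le> i" shows "AE \<omega> in M. mtil M X i \<omega> = real_cond_exp M (nat_filtration M X (i - 1)) (X i) \<omega>"
proof -
  interpret prob_space M by (rule P)
  interpret S: sigma_finite_subalgebra M "nat_filtration M X (i - 1)" by (rule sfs)
  have "AE \<omega> in M. real_cond_exp M (nat_filtration M X (i - 1)) (X i) \<omega> \<ge> 0"
    by (rule S.real_cond_exp_ge_c) (use X_int[OF assms] X_range[OF assms] in auto)
  moreover have "AE \<omega> in M. real_cond_exp M (nat_filtration M X (i - 1)) (X i) \<omega> \<le> 1"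
    by (rule S.real_cond_exp_le_c) (use X_int[OF assms] X_range[OF assms] in auto)
  ultimately show ?thesis by eventually_elim (auto simp: mtil_def)
qed


lemma bnd_int: fixes f :: "'a \<Rightarrow> real" and B :: real shows "f \<in> borel_measurable M \<Longrightarrow> (\<And>\<omega>. \<omega> \<in> space M \<Longrightarrow> \<bar>f \<omega>\<bar> \<le> B) \<Longrightarrow> integrable M f"
proof -
  assume f: "f \<in> borel_measurable M" and B: "\<And>\<omega>. \<omega> \<in> space M \<Longrightarrow> \<bar>f \<omega>\<bar> \<le> B"
  interpret prob_space M by (rule P)
  show ?thesis by (rule integrable_const_bound[where B=B]) (use f B in auto)
qed

lemma diff_bnd: "1 \<le> i \<Longrightarrow> \<omega> \<in> space M \<Longrightarrow> \<bar>X i \<omega> - Xh i \<omega>\<bar> \<le> 1"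
  using X_range[of i \<omega>] Xh_range[of i \<omega>] by auto

context
  fixes l s :: real
  assumes l0: "0 \<le> l" and l1: "l < 1" and s1: "\<bar>s\<bar> = 1"
begin

lemma Z_meas: assumes "1 \<le> i" "i \<le> n" shows "Zf M X Xh l s i \<in> borel_measurable (nat_filtration M X n)"
proof -
  have [measurable]: "X i \<in> borel_measurable (nat_filtration M X n)" by (rule X_F[OF assms])
  have [measurable]: "Xh i \<in> borel_measurable (nat_filtration M X n)"
    by (rule lift_F[OF Xh_pred[OF assms(1)]]) (use assms in auto)
  have [measurable]: "mtil M X i \<in> borel_measurable (nat_filtration M X n)"
    by (rule lift_F[OF mtil_meas]) (use assms in auto)
  show ?thesis unfolding Zf_def psir_def by measurable
qed

lemma Z_pos: "0 < Zf M X Xh l s i \<omega>" by (simp add: Zf_def)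

lemma Z_le: assumes "1 \<le> i" "\<omega> \<in> space M" shows "Zf M X Xh l s i \<omega> \<le> exp 1"
proof -
  have d: "\<bar>X i \<omega> - Xh i \<omega>\<bar> \<le> 1" by (rule diff_bnd[OF assms])
  have "l * \<bar>X i \<omega> - Xh i \<omega>\<bar> \<le> l" using d l0 by (simp add: mult_left_le)
  then have "0 \<le> psir (l * \<bar>X i \<omega> - Xh i \<omega>\<bar>)" using l0 l1 by (intro psir_nonneg) auto
  moreover have "\<bar>X i \<omega> - mtil M X i \<omega>\<bar> \<le> 1" using X_range[OF assms] mtil_range[of i \<omega>] by auto
  then have "\<bar>s * (X i \<omega> - mtil M X i \<omega>)\<bar> \<le> 1" using s1 by (simp add: abs_mult)
  then have "l * (s * (X i \<omega> - mtil M X i \<omega>)) \<le> 1" using l0 l1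
    by (smt (verit, best) abs_le_D1 mult_left_le)
  ultimately show ?thesis unfolding Zf_def by simp
qed

lemma Mp_Suc: "Mp M X Xh l s (Suc n) \<omega> = Mp M X Xh l s n \<omega> * Zf M X Xh l s (Suc n) \<omega>"
  unfolding Mp_def by (simp add: atLeastAtMostSuc_conv mult.commute)

lemma Mp_0: "Mp M X Xh l s 0 \<omega> = 1" unfolding Mp_def by simp

lemma Mp_meas: "Mp M X Xh l s n \<in> borel_measurable (nat_filtration M X n)"
  unfolding Mp_def by (rule borel_measurable_prod) (use Z_meas in auto)

lemma Mp_nonneg: "0 \<le> Mp M X Xh l s n \<omega>"
  unfolding Mp_def by (rule prod_nonneg) (simp add: Z_pos less_imp_le)

lemma Mp_le: assumes "\<omega> \<in> space M" shows "Mp M X Xh l s n \<omega> \<le> exp 1 ^ n"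
proof -
  have "Mp M X Xh l s n \<omega> \<le> (\<Prod>i\<in>{1..n}. exp 1)"
    unfolding Mp_def by (rule prod_mono) (auto intro: less_imp_le[OF Z_pos] Z_le assms)
  then show ?thesis by simp
qed

lemma super:
  assumes D: "D \<in> sets (nat_filtration M X n)"
  shows "(\<integral>\<omega>. indicator D \<omega> * Mp M X Xh l s (Suc n) \<omega> \<partial>M) \<le> (\<integral>\<omega>. indicator D \<omega> * Mp M X Xh l s n \<omega> \<partial>M)"
proof -
  interpret prob_space M by (rule P)
  interpret S: sigma_finite_subalgebra M "nat_filtration M X n" by (rule sfs)
  define i where "i = Suc n"
  have i1: "1 \<le> i" by (simp add: i_def)
  have im: "i - 1 = n" by (simp add: i_def)
  define a where "a \<omega> = l * s * (mtil M X i \<omega> - Xh i \<omega>)" for \<omega>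
  define u where "u \<omega> = l * s * (X i \<omega> - Xh i \<omega>)" for \<omega>
  define W where "W \<omega> = indicator D \<omega> * Mp M X Xh l s n \<omega> * exp (- a \<omega>)" for \<omega>
  have DM: "D \<in> sets M" using D sub_F[of n] by (auto simp: subalgebra_def)
  have [measurable]: "Xh i \<in> borel_measurable (nat_filtration M X n)" using Xh_pred[OF i1] im by simp
  have [measurable]: "mtil M X i \<in> borel_measurable (nat_filtration M X n)" using mtil_meas[of i] im by simp
  have [measurable]: "Mp M X Xh l s n \<in> borel_measurable (nat_filtration M X n)" by (rule Mp_meas)
  have [measurable]: "D \<in> sets (nat_filtration M X n)" by (rule D)
  have WF[measurable]: "W \<in> borel_measurable (nat_filtration M X n)" unfolding W_def a_def by measurable
  have WM[measurable]: "W \<in> borel_measurable M" by (rule liftM[OF WF])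
  have XM[measurable]: "X i \<in> borel_measurable M" by (rule X_meas[OF i1])
  have XhM[measurable]: "Xh i \<in> borel_measurable M" by (rule liftM[OF Xh_pred[OF i1]])
  have mtM[measurable]: "mtil M X i \<in> borel_measurable M" by (rule liftM[OF mtil_meas])
  have MpM[measurable]: "Mp M X Xh l s k \<in> borel_measurable M" for k by (rule liftM[OF Mp_meas])
  have ZM[measurable]: "Zf M X Xh l s i \<in> borel_measurable M" by (rule liftM[OF Z_meas[OF i1 order_refl]])
  have ab: "\<bar>a \<omega>\<bar> \<le> 1" if "\<omega> \<in> space M" for \<omega>
  proof -
    have "\<bar>mtil M X i \<omega> - Xh i \<omega>\<bar> \<le> 1" using mtil_range[of i \<omega>] Xh_range[OF i1 that] by auto
    then have "\<bar>s * (mtil M X i \<omega> - Xh i \<omega>)\<bar> \<le> 1" using s1 by (simp add: abs_mult)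
    then show ?thesis unfolding a_def using l0 l1
      by (simp add: abs_mult mult.assoc) (smt (verit) mult_left_le)
  qed
  have ub: "\<bar>u \<omega>\<bar> = l * \<bar>X i \<omega> - Xh i \<omega>\<bar>" for \<omega> unfolding u_def using s1 l0 by (simp add: abs_mult)
  have ub1: "\<bar>u \<omega>\<bar> < 1" if "\<omega> \<in> space M" for \<omega>
  proof -
    have "l * \<bar>X i \<omega> - Xh i \<omega>\<bar> \<le> l" using diff_bnd[OF i1 that] l0 by (simp add: mult_left_le)
    then show ?thesis using ub l1 by simp
  qed
  define CW :: real where "CW = exp 1 ^ n * exp 1"
  have Wb: "\<bar>W \<omega>\<bar> \<le> CW" if "\<omega> \<in> space M" for \<omega>
  proof -
    have "exp (- a \<omega>) \<le> exp 1" using ab[OF that] by simp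
    moreover have "\<bar>indicator D \<omega> * Mp M X Xh l s n \<omega>\<bar> \<le> exp 1 ^ n"
      using Mp_le[OF that, of n] Mp_nonneg[of n \<omega>] by (auto simp: indicator_def)
    ultimately show ?thesis unfolding W_def CW_def abs_mult
      by (intro mult_mono) auto
  qed
  have W0: "0 \<le> W \<omega>" for \<omega> unfolding W_def using Mp_nonneg by auto
  have Xb: "\<bar>X i \<omega>\<bar> \<le> 1" "\<bar>Xh i \<omega>\<bar> \<le> 1" if "\<omega> \<in> space M" for \<omega>
    using X_range[OF i1 that] Xh_range[OF i1 that] by auto
  have intW: "integrable M (\<lambda>\<omega>. W \<omega> * f \<omega>)" if "f \<in> borel_measurable M" "\<And>\<omega>. \<omega> \<in> space M \<Longrightarrow> \<bar>f \<omega>\<bar> \<le> B" for f :: "'a \<Rightarrow> real" and B :: real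
  proof (rule bnd_int[where B="CW * B"])
    show "(\<lambda>\<omega>. W \<omega> * f \<omega>) \<in> borel_measurable M" using that by measurable
    fix \<omega> assume "\<omega> \<in> space M"
    then show "\<bar>W \<omega> * f \<omega>\<bar> \<le> CW * B" unfolding abs_mult using Wb that(2)
      by (intro mult_mono) (auto simp: CW_def)
  qed
  have eq1: "indicator D \<omega> * Mp M X Xh l s (Suc n) \<omega> = W \<omega> * exp (u \<omega> - psir \<bar>u \<omega>\<bar>)" for \<omega>
  proof -
    have "Zf M X Xh l s i \<omega> = exp (u \<omega> - psir \<bar>u \<omega>\<bar>) * exp (- a \<omega>)"
      unfolding Zf_def ub unfolding u_def a_def by (simp add: exp_add[symmetric] algebra_simps)
    then show ?thesis unfolding W_def Mp_Suc by (simp add: i_def algebra_simps)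
  qed
  have "(\<integral>\<omega>. indicator D \<omega> * Mp M X Xh l s (Suc n) \<omega> \<partial>M) \<le> (\<integral>\<omega>. W \<omega> * (1 + u \<omega>) \<partial>M)"
  proof (rule integral_mono)
    show "integrable M (\<lambda>\<omega>. indicator D \<omega> * Mp M X Xh l s (Suc n) \<omega>)"
    proof (rule bnd_int[where B="exp 1 ^ Suc n"])
      show "(\<lambda>\<omega>. indicator D \<omega> * Mp M X Xh l s (Suc n) \<omega>) \<in> borel_measurable M" using DM by measurable
      fix \<omega> assume "\<omega> \<in> space M"
      then show "\<bar>indicator D \<omega> * Mp M X Xh l s (Suc n) \<omega>\<bar> \<le> exp 1 ^ Suc n"
        using Mp_le[of \<omega> "Suc n"] Mp_nonneg[of "Suc n" \<omega>] by (auto simp: indicator_def)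
    qed
    show "integrable M (\<lambda>\<omega>. W \<omega> * (1 + u \<omega>))"
      by (rule intW[of _ 2]) (auto simp: u_def dest: ub1)
    fix \<omega> assume "\<omega> \<in> space M"
    then show "indicator D \<omega> * Mp M X Xh l s (Suc n) \<omega> \<le> W \<omega> * (1 + u \<omega>)"
      unfolding eq1 using fan_ineq[OF ub1] W0 by (intro mult_left_mono) auto
  qed
  also have "(\<integral>\<omega>. W \<omega> * (1 + u \<omega>) \<partial>M) = (\<integral>\<omega>. W \<omega> * (1 + a \<omega>) \<partial>M)"
  proof -
    have iX: "integrable M (\<lambda>\<omega>. W \<omega> * X i \<omega>)" by (rule intW[of _ 1]) (use Xb in auto)
    have iM: "integrable M (\<lambda>\<omega>. W \<omega> * mtil M X i \<omega>)" by (rule intW[of _ 1]) (use mtil_range in auto)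
    have iH: "integrable M (\<lambda>\<omega>. W \<omega> * (1 - l * s * Xh i \<omega>))"
    proof (rule intW[of _ 2])
      fix \<omega> assume w: "\<omega> \<in> space M"
      have "\<bar>l * s * Xh i \<omega>\<bar> \<le> 1" using Xb(2)[OF w] l0 l1 s1 unfolding abs_mult
        by (smt (verit) mult_le_one abs_ge_zero)
      then show "\<bar>1 - l * s * Xh i \<omega>\<bar> \<le> 2" by auto
    qed auto
    have ce: "(\<integral>\<omega>. W \<omega> * real_cond_exp M (nat_filtration M X n) (X i) \<omega> \<partial>M) = (\<integral>\<omega>. W \<omega> * X i \<omega> \<partial>M)"
      by (rule S.real_cond_exp_intg(2)[OF iX WF XM])
    have "AE \<omega> in M. W \<omega> * mtil M X i \<omega> = W \<omega> * real_cond_exp M (nat_filtration M X n) (X i) \<omega>"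
      using mtil_AE[OF i1] im by auto
    then have ce2: "(\<integral>\<omega>. W \<omega> * mtil M X i \<omega> \<partial>M) = (\<integral>\<omega>. W \<omega> * X i \<omega> \<partial>M)"
      using ce by (subst integral_cong_AE[where g="\<lambda>\<omega>. W \<omega> * real_cond_exp M (nat_filtration M X n) (X i) \<omega>"]) auto
    have e1: "(\<lambda>\<omega>. W \<omega> * (1 + u \<omega>)) = (\<lambda>\<omega>. W \<omega> * (1 - l * s * Xh i \<omega>) + (l * s) * (W \<omega> * X i \<omega>))"
      unfolding u_def by (auto simp: algebra_simps)
    have e2: "(\<lambda>\<omega>. W \<omega> * (1 + a \<omega>)) = (\<lambda>\<omega>. W \<omega> * (1 - l * s * Xh i \<omega>) + (l * s) * (W \<omega> * mtil M X i \<omega>))"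
      unfolding a_def by (auto simp: algebra_simps)
    show ?thesis unfolding e1 e2
      using iX iM iH ce2 by (simp add: Bochner_Integration.integral_add)
  qed
  also have "(\<integral>\<omega>. W \<omega> * (1 + a \<omega>) \<partial>M) \<le> (\<integral>\<omega>. W \<omega> * exp (a \<omega>) \<partial>M)"
  proof (rule integral_mono)
    show "integrable M (\<lambda>\<omega>. W \<omega> * (1 + a \<omega>))"
      by (rule intW[of _ 2]) (auto simp: a_def dest: ab)
    show "integrable M (\<lambda>\<omega>. W \<omega> * exp (a \<omega>))"
    proof (rule intW[of _ "exp 1"])
      fix \<omega> assume "\<omega> \<in> space M" then show "\<bar>exp (a \<omega>)\<bar> \<le> exp 1" using ab[of \<omega>] by simp
    qed (auto simp: a_def)
    fix \<omega> show "W \<omega> * (1 + a \<omega>) \<le> W \<omega> * exp (a \<omega>)"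
      using W0 exp_ge_add_one_self[of "a \<omega>"] by (intro mult_left_mono) (auto simp: add.commute)
  qed
  also have "(\<integral>\<omega>. W \<omega> * exp (a \<omega>) \<partial>M) = (\<integral>\<omega>. indicator D \<omega> * Mp M X Xh l s n \<omega> \<partial>M)"
    unfolding W_def by (simp add: exp_minus field_simps)
  finally show ?thesis .
qed

lemma bad_set:
  assumes c: "c > 1"
  shows "{\<omega>\<in>space M. \<exists>n. c \<le> Mp M X Xh l s n \<omega>} \<in> sets M \<and>
         measure M {\<omega>\<in>space M. \<exists>n. c \<le> Mp M X Xh l s n \<omega>} \<le> 1 / c"
proof (rule ville[OF P sub_F _ Mp_meas Mp_nonneg _ Mp_0 super c])
  show "\<And>n. sets (nat_filtration M X n) \<subseteq> sets (nat_filtration M X (Suc n))" by (rule mono_F) simp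
  show "\<And>n. \<exists>B. \<forall>\<omega>\<in>space M. Mp M X Xh l s n \<omega> \<le> B" using Mp_le by blast
qed

end
end



lemma det_bound:
  fixes S v lk lx Q \<eta> :: real
  assumes lk: "0 < lk" "lk \<le> lx" "lx \<le> v" and v: "0 < v" "v < Q" "Q \<le> \<eta> * v" and eta: "\<eta> > 1"
    and hs: "\<And>s. s \<in> {1, -1} \<Longrightarrow> s * S < lk / sqrt (lk / Q) + sqrt (lk / Q) * v"
  shows "\<bar>S\<bar> \<le> (sqrt \<eta> + 1) * sqrt (v * lx)"
proof -
  have Q0: "Q > 0" using v by linarith
  have T1: "lk / sqrt (lk / Q) \<le> sqrt \<eta> * sqrt (v * lx)"
  proof -
    have "lk / sqrt (lk / Q) = sqrt lk * sqrt Q"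
    proof -
      have "sqrt lk * sqrt lk = lk" using lk by simp
      then show ?thesis using lk Q0 by (simp add: real_sqrt_divide field_simps)
    qed
    also have "\<dots> = sqrt (lk * Q)" by (simp add: real_sqrt_mult)
    also have "\<dots> \<le> sqrt (\<eta> * (v * lx))"
    proof (rule real_sqrt_le_mono)
      have "lk * Q \<le> lx * (\<eta> * v)" using lk v Q0 by (intro mult_mono) auto
      then show "lk * Q \<le> \<eta> * (v * lx)" by (simp add: algebra_simps)
    qed
    also have "\<dots> = sqrt \<eta> * sqrt (v * lx)" by (simp add: real_sqrt_mult)
    finally show ?thesis .
  qed
  have T2: "sqrt (lk / Q) * v \<le> sqrt (v * lx)"
  proof -
    have "sqrt (lk / Q * v^2) = sqrt (lk / Q) * sqrt (v^2)" by (rule real_sqrt_mult)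
    then have "sqrt (lk / Q) * v = sqrt (lk / Q * v^2)" using v by simp
    also have "\<dots> \<le> sqrt (v * lx)"
    proof (rule real_sqrt_le_mono)
      have "v / Q \<le> 1" using v Q0 by simp
      then have "lk / Q * v^2 = lk * v * (v / Q)" by (simp add: power2_eq_square field_simps)
      also have "\<dots> \<le> lk * v * 1" using \<open>v / Q \<le> 1\<close> lk v by (intro mult_left_mono) auto
      also have "\<dots> \<le> v * lx" using lk v by (simp add: mult.commute mult_left_mono)
      finally show "lk / Q * v^2 \<le> v * lx" .
    qed
    finally show ?thesis .
  qed
  have "S < lk / sqrt (lk / Q) + sqrt (lk / Q) * v" using hs[of 1] by simp
  moreover have "- S < lk / sqrt (lk / Q) + sqrt (lk / Q) * v" using hs[of "-1"] by simp
  ultimately show ?thesis using T1 T2 by (simp add: algebra_simps abs_if)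
qed




lemma Vsum_fin:
  assumes "Vsum X Xh t \<omega> = ereal v"
  shows "\<forall>i\<in>{1..t}. \<bar>X i \<omega> - Xh i \<omega>\<bar> < 1" "v = (\<Sum>i\<in>{1..t}. psir \<bar>X i \<omega> - Xh i \<omega>\<bar>)"
proof -
  show a: "\<forall>i\<in>{1..t}. \<bar>X i \<omega> - Xh i \<omega>\<bar> < 1"
  proof (rule ccontr)
    assume "\<not> ?thesis"
    then obtain i where "i \<in> {1..t}" "\<not> \<bar>X i \<omega> - Xh i \<omega>\<bar> < 1" by blast
    then have "Vsum X Xh t \<omega> = \<infinity>" unfolding Vsum_def
      by (subst sum_Pinfty) (auto simp: psiE_def)
    then show False using assms by simp
  qed
  have "Vsum X Xh t \<omega> = (\<Sum>i\<in>{1..t}. ereal (psir \<bar>X i \<omega> - Xh i \<omega>\<bar>))"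
    unfolding Vsum_def using a by (intro sum.cong) (auto simp: psiE_def psir_def)
  then show "v = (\<Sum>i\<in>{1..t}. psir \<bar>X i \<omega> - Xh i \<omega>\<bar>)" using assms by simp
qed

theorem mainTheorem6:
  fixes M :: "'a measure" and X Xh :: "nat \<Rightarrow> 'a \<Rightarrow> real"
    and h :: "real \<Rightarrow> real" and \<eta> \<alpha> L0 :: real
  assumes "prob_space M"
    and X_meas: "\<And>t. t \<ge> 1 \<Longrightarrow> X t \<in> borel_measurable M"
    and X_range: "\<And>t \<omega>. t \<ge> 1 \<Longrightarrow> \<omega> \<in> space M \<Longrightarrow> X t \<omega> \<in> {0..1}"
    and Xh_pred: "\<And>t. t \<ge> 1 \<Longrightarrow> Xh t \<in> borel_measurable (nat_filtration M X (t - 1))"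
    and Xh_range: "\<And>t \<omega>. t \<ge> 1 \<Longrightarrow> \<omega> \<in> space M \<Longrightarrow> Xh t \<omega> \<in> {0..<1}"
    and h_pos: "\<And>x. x \<ge> 0 \<Longrightarrow> h x > 0"
    and h_mono: "mono_on {0..} h"
    and h_summable: "summable (\<lambda>j. 1 / h (real j))"
    and h_sum: "(\<Sum>j. 1 / h (real j)) \<le> 1"
    and \<eta>: "\<eta> > 1" and \<alpha>: "0 < \<alpha>" "\<alpha> < 1" and L0: "L0 \<ge> 1"
  shows "\<exists>A \<in> sets M. measure M A \<ge> 1 - \<alpha> \<and>
     (\<forall>\<omega>\<in>A. \<forall>t\<ge>1. \<forall>v::real.
        Vsum X Xh t \<omega> = ereal v \<longrightarrow> L0 \<le> v \<longrightarrow>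
        h (log \<eta> (v / L0)) \<le> \<alpha> / 2 * exp v \<longrightarrow>
        \<bar>emp_mean X t \<omega> - avg_cond_mean M X t \<omega>\<bar>
          \<le> (sqrt \<eta> + 1) / real t * sqrt (v * (ln (2 / \<alpha>) + ln (h (log \<eta> (v / L0))))))"
proof -
  note P = assms(1)
  interpret prob_space M by (rule P)
  note ctx = P X_meas X_range Xh_pred Xh_range
  have h1: "h (real j) \<ge> 1" for j
  proof -
    have "1 / h (real j) \<le> (\<Sum>j. 1 / h (real j))"
      using sum_le_suminf[OF h_summable, of "{j}"] h_pos by (auto simp: less_imp_le)
    then have "1 / h (real j) \<le> 1" using h_sum by linarith
    then show ?thesis using h_pos[of "real j"] by (simp add: field_simps)
  qed
  define ell where "ell k = ln (2 * h (real k) / \<alpha>)" for k :: nat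
  define lam where "lam k = (if sqrt (ell k / (L0 * \<eta> ^ Suc k)) < 1 then sqrt (ell k / (L0 * \<eta> ^ Suc k)) else 0)" for k :: nat
  define c where "c k = 2 * h (real k) / \<alpha>" for k :: nat
  have c1: "c k > 1" for k
  proof -
    have "2 * 1 \<le> 2 * h (real k)" using h1[of k] by simp
    moreover have "2 * h (real k) / \<alpha> > 2 * h (real k)" using \<alpha> h_pos[of "real k"] by (simp add: field_simps)
    ultimately show ?thesis unfolding c_def by linarith
  qed
  have ellpos: "0 < ell k" for k unfolding ell_def using c1[of k] by (simp add: c_def)
  have lam0: "0 \<le> lam k" "lam k < 1" for k
  proof -
    have "0 < L0 * \<eta> ^ Suc k" using L0 \<eta> by simp
    then show "0 \<le> lam k" "lam k < 1" unfolding lam_def using ellpos[of k] by auto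
  qed
  define B where "B k s = {\<omega>\<in>space M. \<exists>n. c k \<le> Mp M X Xh (lam k) s n \<omega>}" for k s
  have Bs: "B k s \<in> sets M \<and> measure M (B k s) \<le> 1 / c k" if "\<bar>s\<bar> = 1" for k s
    unfolding B_def by (rule bad_set[OF ctx lam0(1) lam0(2) that c1])
  define BB where "BB k = B k 1 \<union> B k (-1)" for k
  have BBs: "BB k \<in> sets M" for k unfolding BB_def using Bs[of 1 k] Bs[of "-1" k] by auto
  have BBm: "measure M (BB k) \<le> \<alpha> / h (real k)" for k
  proof -
    have "measure M (BB k) \<le> measure M (B k 1) + measure M (B k (-1))"
      unfolding BB_def using Bs[of 1 k] Bs[of "-1" k] by (intro measure_Un_le) auto
    also have "\<dots> \<le> 1 / c k + 1 / c k" using Bs[of 1 k] Bs[of "-1" k] by auto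
    also have "\<dots> = \<alpha> / h (real k)" unfolding c_def using h_pos[of "real k"] \<alpha> by (simp add: field_simps)
    finally show ?thesis .
  qed
  have summ: "summable (\<lambda>k. \<alpha> / h (real k))"
    using summable_mult[OF h_summable, of \<alpha>] by simp
  have summB: "summable (\<lambda>k. measure M (BB k))"
    by (rule summable_comparison_test'[OF summ]) (use BBm in auto)
  define Bad where "Bad = (\<Union>k. BB k)"
  have Bad_s: "Bad \<in> sets M" unfolding Bad_def using BBs by auto
  have Bad_m: "measure M Bad \<le> \<alpha>"
  proof -
    have "measure M Bad \<le> (\<Sum>k. measure M (BB k))"
      unfolding Bad_def by (rule finite_measure_subadditive_countably) (use BBs summB in auto)
    also have "\<dots> \<le> (\<Sum>k. \<alpha> / h (real k))" by (rule suminf_le[OF BBm summB summ])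
    also have "\<dots> = \<alpha> * (\<Sum>k. 1 / h (real k))" using suminf_mult[OF h_summable, of \<alpha>] by simp
    also have "\<dots> \<le> \<alpha>" using h_sum \<alpha> by (simp add: mult_left_le)
    finally show ?thesis .
  qed
  define N where "N = {\<omega>\<in>space M. \<exists>i\<ge>1. mtil M X i \<omega> \<noteq> real_cond_exp M (nat_filtration M X (i - 1)) (X i) \<omega>}"
  have N_s: "N \<in> sets M"
  proof -
    have [measurable]: "mtil M X i \<in> borel_measurable M" for i by (rule liftM[OF ctx mtil_meas[OF ctx]])
    show ?thesis unfolding N_def by measurable
  qed
  have N_m: "measure M N = 0"
  proof -
    have "AE \<omega> in M. \<forall>i. 1 \<le> i \<longrightarrow> mtil M X i \<omega> = real_cond_exp M (nat_filtration M X (i - 1)) (X i) \<omega>"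
      unfolding AE_all_countable using mtil_AE[OF ctx] by auto
    then have "emeasure M N = 0" by (subst (asm) AE_iff_measurable[OF N_s]) (auto simp: N_def)
    then show ?thesis by (simp add: measure_def)
  qed
  define A where "A = space M - (Bad \<union> N)"
  have A_s: "A \<in> sets M" unfolding A_def using Bad_s N_s by auto
  have A_m: "measure M A \<ge> 1 - \<alpha>"
  proof -
    have "measure M A = 1 - measure M (Bad \<union> N)" unfolding A_def using Bad_s N_s by (intro prob_compl) auto
    moreover have "measure M (Bad \<union> N) \<le> measure M Bad + measure M N" using Bad_s N_s by (rule measure_Un_le)
    ultimately show ?thesis using Bad_m N_m by linarith
  qed
  show ?thesis
  proof (intro bexI[OF _ A_s] conjI A_m ballI allI impI)
    fix \<omega> t v
    assume \<omega>: "\<omega> \<in> A" and t: "1 \<le> t" and V: "Vsum X Xh t \<omega> = ereal v" and vL: "L0 \<le> v"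
      and hv: "h (log \<eta> (v / L0)) \<le> \<alpha> / 2 * exp v"
    define x where "x = log \<eta> (v / L0)"
    define lx where "lx = ln (2 * h x / \<alpha>)"
    have \<omega>s: "\<omega> \<in> space M" and \<omega>B: "\<omega> \<notin> Bad" and \<omega>N: "\<omega> \<notin> N" using \<omega> by (auto simp: A_def)
    have vpos: "v > 0" using vL L0 by linarith
    have vL1: "v / L0 \<ge> 1" using vL L0 by simp
    have x0: "x \<ge> 0" unfolding x_def using vL1 \<eta> by simp
    define k where "k = nat \<lfloor>x\<rfloor>"
    have kx: "real k \<le> x" "x < real k + 1" unfolding k_def using x0 by linarith+
    have pk: "\<eta> ^ k \<le> v / L0"
    proof -
      have "\<eta> powr real k \<le> v / L0" using kx(1) le_log_iff[of \<eta> "v / L0" "real k"] \<eta> vL1 by (simp add: x_def)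
      then show ?thesis using \<eta> by (simp add: powr_realpow)
    qed
    have pk1: "v / L0 < \<eta> ^ Suc k"
    proof -
      have "\<not> real (Suc k) \<le> log \<eta> (v / L0)" using kx(2) by (simp add: x_def)
      then have "\<not> \<eta> powr real (Suc k) \<le> v / L0" using le_log_iff[of \<eta> "v / L0" "real (Suc k)"] \<eta> vL1 by simp
      then show ?thesis using \<eta> by (simp add: powr_realpow del: of_nat_Suc)
    qed
    define Q where "Q = L0 * \<eta> ^ Suc k"
    have Qv: "v < Q" using pk1 L0 by (simp add: Q_def field_simps)
    have Qv2: "Q \<le> \<eta> * v" using pk L0 \<eta> by (simp add: Q_def field_simps)
    have hk: "h (real k) \<le> h x" using h_mono kx(1) x0 by (auto intro: mono_onD)
    have hx: "h x > 0" using h_pos x0 by simp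
    have lk_pos: "0 < ell k" unfolding ell_def using c1[of k] by (simp add: c_def)
    have lk_lx: "ell k \<le> lx" unfolding ell_def lx_def using hk h_pos[of "real k"] \<alpha>
      by (intro ln_mono) (auto simp: divide_right_mono)
    have lx_v: "lx \<le> v"
    proof -
      have "2 * h x / \<alpha> \<le> exp v" using hv \<alpha> by (simp add: x_def field_simps)
      then have "lx \<le> ln (exp v)" unfolding lx_def using hx \<alpha> by (intro ln_mono) auto
      then show ?thesis by simp
    qed
    have lamk: "lam k = sqrt (ell k / Q)"
    proof -
      have "ell k / Q < 1" using lk_lx lx_v Qv vpos by simp
      then have "sqrt (ell k / Q) < 1" by simp
      then show ?thesis unfolding lam_def Q_def by simp
    qed
    have fin: "\<forall>i\<in>{1..t}. \<bar>X i \<omega> - Xh i \<omega>\<bar> < 1" and vsum: "v = (\<Sum>i\<in>{1..t}. psir \<bar>X i \<omega> - Xh i \<omega>\<bar>)"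
      using Vsum_fin[OF V] by auto
    have mt_eq: "mtil M X i \<omega> = real_cond_exp M (nat_filtration M X (i - 1)) (X i) \<omega>" if "1 \<le> i" for i
      using \<omega>N \<omega>s that by (auto simp: N_def)
    define S where "S = (\<Sum>i\<in>{1..t}. X i \<omega> - real_cond_exp M (nat_filtration M X (i - 1)) (X i) \<omega>)"
    have main: "s * S < ell k / sqrt (ell k / Q) + sqrt (ell k / Q) * v" if s: "s \<in> {1, -1}" for s
    proof -
      define l where "l = lam k"
      have s1: "\<bar>s\<bar> = 1" using s by auto
      have lpos: "0 < l" unfolding l_def lamk using lk_pos Qv vpos by simp
      have "\<omega> \<notin> B k s" using \<omega>B s by (auto simp: Bad_def BB_def)
      then have "Mp M X Xh l s t \<omega> < c k" using \<omega>s by (auto simp: B_def l_def not_le)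
      moreover have "Mp M X Xh l s t \<omega> = exp (\<Sum>i\<in>{1..t}. l * (s * (X i \<omega> - mtil M X i \<omega>)) - psir (l * \<bar>X i \<omega> - Xh i \<omega>\<bar>))"
        unfolding Mp_def Zf_def by (simp add: exp_sum)
      moreover have "c k = exp (ell k)" unfolding c_def ell_def using c1[of k] by (simp add: c_def)
      ultimately have lt: "(\<Sum>i\<in>{1..t}. l * (s * (X i \<omega> - mtil M X i \<omega>)) - psir (l * \<bar>X i \<omega> - Xh i \<omega>\<bar>)) < ell k"
        by simp
      have "(\<Sum>i\<in>{1..t}. l * (s * (X i \<omega> - mtil M X i \<omega>)) - psir (l * \<bar>X i \<omega> - Xh i \<omega>\<bar>))
          = l * s * S - (\<Sum>i\<in>{1..t}. psir (l * \<bar>X i \<omega> - Xh i \<omega>\<bar>))"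
      proof -
        have "(\<Sum>i\<in>{1..t}. l * (s * (X i \<omega> - mtil M X i \<omega>)) - psir (l * \<bar>X i \<omega> - Xh i \<omega>\<bar>))
           = (\<Sum>i\<in>{1..t}. (l * s) * (X i \<omega> - real_cond_exp M (nat_filtration M X (i - 1)) (X i) \<omega>)) - (\<Sum>i\<in>{1..t}. psir (l * \<bar>X i \<omega> - Xh i \<omega>\<bar>))"
          unfolding sum_subtractf[symmetric] by (intro sum.cong) (auto simp: mt_eq)
        then show ?thesis unfolding S_def sum_distrib_left[symmetric] by simp
      qed
      moreover have "(\<Sum>i\<in>{1..t}. psir (l * \<bar>X i \<omega> - Xh i \<omega>\<bar>)) \<le> l^2 * v"
        unfolding vsum sum_distrib_left
        by (rule sum_mono, rule psir_scale) (use fin lpos lam0[of k] in \<open>auto simp: l_def\<close>)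
      ultimately have "l * (s * S) < ell k + l^2 * v" using lt by (simp add: algebra_simps)
      then have "s * S < (ell k + l^2 * v) / l" using lpos by (simp add: field_simps)
      also have "\<dots> = ell k / l + l * v" using lpos by (simp add: field_simps power2_eq_square)
      finally show ?thesis unfolding l_def lamk .
    qed
    have bnd: "\<bar>S\<bar> \<le> (sqrt \<eta> + 1) * sqrt (v * lx)"
      by (rule det_bound[OF lk_pos lk_lx lx_v vpos Qv Qv2 \<eta> main])
    have lx_eq: "lx = ln (2 / \<alpha>) + ln (h x)"
    proof -
      have "2 * h x / \<alpha> = (2 / \<alpha>) * h x" by simp
      then have "lx = ln ((2 / \<alpha>) * h x)" unfolding lx_def by simp
      also have "\<dots> = ln (2 / \<alpha>) + ln (h x)" using hx \<alpha> by (intro ln_mult_pos) auto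
      finally show ?thesis .
    qed
    have "emp_mean X t \<omega> - avg_cond_mean M X t \<omega> = S / real t"
      unfolding emp_mean_def avg_cond_mean_def S_def by (simp add: sum_subtractf diff_divide_distrib)
    then have "\<bar>emp_mean X t \<omega> - avg_cond_mean M X t \<omega>\<bar> = \<bar>S\<bar> / real t" by simp
    also have "\<dots> \<le> (sqrt \<eta> + 1) * sqrt (v * lx) / real t" using bnd t by (simp add: divide_right_mono)
    finally show "\<bar>emp_mean X t \<omega> - avg_cond_mean M X t \<omega>\<bar>
          \<le> (sqrt \<eta> + 1) / real t * sqrt (v * (ln (2 / \<alpha>) + ln (h (log \<eta> (v / L0)))))"
      unfolding lx_eq x_def by simp
  qed
qed


end
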